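(* Let $A$ be a finite alphabet, $n\ge1$, and $L\subseteq (A^\ast)^n$ an $n$-variable language. The following are equivalent: (i) $L$ is the accepted language of an FAA; (ii) $L$ is the accepted language of a DFAA; (iii) $L$ is the accepted language of an SAA.
   Context: $A^\ast$ is the set of finite words over $A$, $[n]=\{1,\ldots,n\}$, $\$$ a new symbol, and $A^\$=(A\sqcup\{\$\})^n\setminus\{(\$,\ldots,\$)\}$ the padded alphabet. Let $E=P(P([n])\setminus\{\emptyset\})$ (sets of filters; a filter is a nonempty subset of $[n]$). An FAA (non-deterministic filter asynchronous automaton) is a quadruple $(S,S_0,\Delta,S_f)$ with $S$ a finite set of states, $S_0\subseteq S$ initial states, $S_f\subseteq S$ accept states, and $\Delta:S\times A^\$\to P(S)\times E$, such that for all $\overline\sigma=(\sigma_1,\ldots,\sigma_n)\in A^\$$ and $s\in S$, if $\sigma_i=\$$ and the set of next states of $\Delta(s,\overline\sigma)$ is nonempty, then $i$ lies in none of the filters of $\Delta(s,\overline\sigma)$. It accepts $(w_1,\ldots,w_n)$ as follows: the words are written on $n$ tapes with a head on each; the symbol under head $i$ is the next unread letter of $w_i$, or $\$$ if $w_i$ is fully read. Starting in a state of $S_0$, at a state $s$ with current symbol tuple $\overline\sigma$, if $\Delta(s,\overline\sigma)=(T,X)$ one may choose a filter $\chi\in X$ and a state $t\in T$, advance the heads with index in $\chi$ by one position, and move to $t$. The tuple is accepted if some such run reads all tapes completely and ends in a state of $S_f$. A DFAA is an FAA in which $|X|\le1$ whenever $\Delta(s,\overline\sigma)=(T,X)$.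 An SAA (non-deterministic semi-sorted asynchronous automaton) is a non-deterministic finite state automaton over $A\sqcup\{\$\}$ (possibly several start states and $\epsilon$-transitions) with a partition of its states into $S_1,\ldots,S_n$; it accepts $(w_1,\ldots,w_n)$ iff there is a path from a start state to an accept state reading a shuffle of $(w_1\$,\ldots,w_n\$)$ (an ordering of all letters respecting the order in each word), where a transition out of a state in $S_i$ reads the next letter of tape $i$. *)

theory Defs
  imports Main
begin

text \<open>The alphabet A is a finite type 'a. The padding symbol \$ is None,
  a letter c of A is Some c. Tape indices are 0..n-1 (instead of 1..n).
  An n-tuple of words is a list of n words.\<close>

definition padded_alphabet :: "nat \<Rightarrow> 'a option list set" where
  "padded_alphabet n = {\<sigma>. length \<sigma> = n \<and> \<sigma> \<noteq> replicate n None}"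

definition filters :: "nat \<Rightarrow> nat set set" where
  "filters n = {\<chi>. \<chi> \<noteq> {} \<and> \<chi> \<subseteq> {..<n}}"

record 'a faa =
  f_states :: "nat set"
  f_init :: "nat set"
  f_final :: "nat set"
  f_delta :: "nat \<Rightarrow> 'a option list \<Rightarrow> nat set \<times> nat set set"

definition faa_wf :: "nat \<Rightarrow> 'a faa \<Rightarrow> bool" where
  "faa_wf n M \<longleftrightarrow> finite (f_states M) \<and> f_init M \<subseteq> f_states M \<and> f_final M \<subseteq> f_states M \<and>
    (\<forall>s\<in>f_states M. \<forall>\<sigma>\<in>padded_alphabet n.
       fst (f_delta M s \<sigma>) \<subseteq> f_states M \<and> snd (f_delta M s \<sigma>) \<subseteq> filters n \<and>
       (\<forall>i<n. \<sigma> ! i = None \<and> fst (f_delta M s \<sigma>) \<noteq> {} \<longrightarrow>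
          (\<forall>\<chi>\<in>snd (f_delta M s \<sigma>). i \<notin> \<chi>)))"

definition is_dfaa :: "nat \<Rightarrow> 'a faa \<Rightarrow> bool" where
  "is_dfaa n M \<longleftrightarrow> faa_wf n M \<and>
    (\<forall>s\<in>f_states M. \<forall>\<sigma>\<in>padded_alphabet n. card (snd (f_delta M s \<sigma>)) \<le> 1)"

text \<open>Symbols under the heads at positions p (None = \$ once the word is fully read).\<close>
definition cur_sym :: "'a list list \<Rightarrow> nat list \<Rightarrow> 'a option list" where
  "cur_sym ws p = map (\<lambda>i. if p ! i < length (ws ! i) then Some (ws ! i ! (p ! i)) else None)
                     [0..<length ws]"

definition advance :: "nat set \<Rightarrow> nat list \<Rightarrow> nat list" where
  "advance \<chi> p = map (\<lambda>i. if i \<in> \<chi> then Suc (p ! i) else p ! i) [0..<length p]"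

definition faa_step :: "nat \<Rightarrow> 'a faa \<Rightarrow> 'a list list \<Rightarrow> nat \<times> nat list \<Rightarrow> nat \<times> nat list \<Rightarrow> bool" where
  "faa_step n M ws c c' \<longleftrightarrow>
     (let s = fst c; p = snd c; t = fst c'; p' = snd c'; \<sigma> = cur_sym ws p in
      s \<in> f_states M \<and> \<sigma> \<in> padded_alphabet n \<and>
      (\<exists>\<chi>\<in>snd (f_delta M s \<sigma>). t \<in> fst (f_delta M s \<sigma>) \<and> p' = advance \<chi> p))"

definition faa_accepts :: "nat \<Rightarrow> 'a faa \<Rightarrow> 'a list list \<Rightarrow> bool" where
  "faa_accepts n M ws \<longleftrightarrow> length ws = n \<and>
     (\<exists>s0\<in>f_init M. \<exists>sf\<in>f_final M.
        (faa_step n M ws)\<^sup>*\<^sup>* (s0, replicate n 0) (sf, map length ws))"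

definition faa_lang :: "nat \<Rightarrow> 'a faa \<Rightarrow> 'a list list set" where
  "faa_lang n M = {ws. faa_accepts n M ws}"

text \<open>SAA: NFA over A + \{\$\} (letter Some (Some c) = c, Some None = \$, None = epsilon),
  with a map q_part assigning each state its block S_i of the partition.\<close>
record 'a saa =
  q_states :: "nat set"
  q_init :: "nat set"
  q_final :: "nat set"
  q_trans :: "(nat \<times> 'a option option \<times> nat) set"
  q_part :: "nat \<Rightarrow> nat"

definition saa_wf :: "nat \<Rightarrow> 'a saa \<Rightarrow> bool" where
  "saa_wf n M \<longleftrightarrow> finite (q_states M) \<and> q_init M \<subseteq> q_states M \<and> q_final M \<subseteq> q_states M \<and>
     (\<forall>(q, a, q')\<in>q_trans M. q \<in> q_states M \<and> q' \<in> q_states M) \<and>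
     (\<forall>q\<in>q_states M. q_part M q < n)"

text \<open>Positions p: p!i letters of (ws!i)\$ have been read (p!i ranges up to length + 1).\<close>
definition saa_step :: "nat \<Rightarrow> 'a saa \<Rightarrow> 'a list list \<Rightarrow> nat \<times> nat list \<Rightarrow> nat \<times> nat list \<Rightarrow> bool" where
  "saa_step n M ws c c' \<longleftrightarrow>
     (let q = fst c; p = snd c; q' = fst c'; p' = snd c'; i = q_part M q in
      ((q, None, q') \<in> q_trans M \<and> p' = p) \<or>
      (\<exists>a. (q, Some a, q') \<in> q_trans M \<and> i < n \<and> p ! i \<le> length (ws ! i) \<and>
           a = (if p ! i < length (ws ! i) then Some (ws ! i ! (p ! i)) else None) \<and>
           p' = p[i := Suc (p ! i)]))"

definition saa_accepts :: "nat \<Rightarrow> 'a saa \<Rightarrow> 'a list list \<Rightarrow> bool" where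
  "saa_accepts n M ws \<longleftrightarrow> length ws = n \<and>
     (\<exists>q0\<in>q_init M. \<exists>qf\<in>q_final M.
        (saa_step n M ws)\<^sup>*\<^sup>* (q0, replicate n 0) (qf, map (\<lambda>w. Suc (length w)) ws))"

definition saa_lang :: "nat \<Rightarrow> 'a saa \<Rightarrow> 'a list list set" where
  "saa_lang n M = {ws. saa_accepts n M ws}"

end

theory Submission
  imports Defs
begin


lemma length_advance[simp]: "length (advance D p) = length p"
  by (simp add: advance_def)
lemma nth_advance[simp]: "i < length p \<Longrightarrow> advance D p ! i = (if i \<in> D then Suc (p!i) else p!i)"
  by (simp add: advance_def)
lemma length_cur_sym[simp]: "length (cur_sym ws p) = length ws"
  by (simp add: cur_sym_def)
lemma nth_cur_sym[simp]: "i < length ws \<Longrightarrow> cur_sym ws p ! i = (if p!i < length (ws!i) then Some (ws!i!(p!i)) else None)"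
  by (simp add: cur_sym_def)
lemma advance_empty[simp]: "advance {} p = p"
  by (rule nth_equalityI) auto
lemma advance_upd1: "i \<notin> D \<Longrightarrow> i < length p \<Longrightarrow> (advance D p)[i := Suc (p!i)] = advance (insert i D) p"
  by (rule nth_equalityI) (auto simp: nth_list_update)
lemma advance_upd2: "i \<notin> D \<Longrightarrow> i < length p \<Longrightarrow> (advance D p)[i := Suc (p!i)] = advance D (advance {i} p)"
  by (rule nth_equalityI) (auto simp: nth_list_update)
lemma cur_sym_end: "cur_sym ws (map length ws) = replicate (length ws) None"
  by (rule nth_equalityI) auto
lemma advance_all: "length p = n \<Longrightarrow> advance {..<n} p = map Suc p"
  by (rule nth_equalityI) auto




definition gsaa_step :: "nat \<Rightarrow> ('q \<times> 'a option option \<times> 'q) set \<Rightarrow> ('q \<Rightarrow> nat) \<Rightarrow> 'a list list \<Rightarrow> 'q \<times> nat list \<Rightarrow> 'q \<times> nat list \<Rightarrow> bool" where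
  "gsaa_step n Tr part ws c c' \<longleftrightarrow>
     (let q = fst c; p = snd c; q' = fst c'; p' = snd c'; i = part q in
      ((q, None, q') \<in> Tr \<and> p' = p) \<or>
      (\<exists>a. (q, Some a, q') \<in> Tr \<and> i < n \<and> p ! i \<le> length (ws ! i) \<and>
           a = (if p ! i < length (ws ! i) then Some (ws ! i ! (p ! i)) else None) \<and>
           p' = p[i := Suc (p ! i)]))"

definition gsaa_acc where
  "gsaa_acc n I F Tr part ws \<longleftrightarrow> length ws = n \<and>
     (\<exists>q0\<in>I. \<exists>qf\<in>F. (gsaa_step n Tr part ws)\<^sup>*\<^sup>* (q0, replicate n 0) (qf, map (\<lambda>w. Suc (length w)) ws))"

definition gfaa_step :: "nat \<Rightarrow> 'q set \<Rightarrow> ('q \<Rightarrow> 'a option list \<Rightarrow> 'q set \<times> nat set set) \<Rightarrow> 'a list list \<Rightarrow> 'q \<times> nat list \<Rightarrow> 'q \<times> nat list \<Rightarrow> bool" where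
  "gfaa_step n Q d ws c c' \<longleftrightarrow>
     (let s = fst c; p = snd c; t = fst c'; p' = snd c'; \<sigma> = cur_sym ws p in
      s \<in> Q \<and> \<sigma> \<in> padded_alphabet n \<and>
      (\<exists>\<chi>\<in>snd (d s \<sigma>). t \<in> fst (d s \<sigma>) \<and> p' = advance \<chi> p))"

definition gfaa_acc where
  "gfaa_acc n Q I F d ws \<longleftrightarrow> length ws = n \<and>
     (\<exists>s0\<in>I. \<exists>sf\<in>F. (gfaa_step n Q d ws)\<^sup>*\<^sup>* (s0, replicate n 0) (sf, map length ws))"

lemma faa_step_eq: "faa_step n M ws = gfaa_step n (f_states M) (f_delta M) ws"
  by (simp add: fun_eq_iff faa_step_def gfaa_step_def)

lemma saa_step_eq: "saa_step n M ws = gsaa_step n (q_trans M) (q_part M) ws"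
  by (simp add: fun_eq_iff saa_step_def gsaa_step_def)

lemma sim_fwd:
  assumes fwd: "\<And>q p q' p'. q \<in> Q \<Longrightarrow> R (q,p) (q',p') \<Longrightarrow> q' \<in> Q \<and> S (f q, p) (f q', p')"
  shows "R\<^sup>*\<^sup>* x y \<Longrightarrow> fst x \<in> Q \<Longrightarrow> S\<^sup>*\<^sup>* (f (fst x), snd x) (f (fst y), snd y) \<and> fst y \<in> Q"
proof (induction rule: rtranclp_induct)
  case base then show ?case by simp
next
  case (step y z)
  then have "S\<^sup>*\<^sup>* (f (fst x), snd x) (f (fst y), snd y)" "fst y \<in> Q" by auto
  moreover have "fst z \<in> Q \<and> S (f (fst y), snd y) (f (fst z), snd z)"
    using fwd[of "fst y" "snd y" "fst z" "snd z"] step(2) \<open>fst y \<in> Q\<close> by simp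
  ultimately show ?case by (meson rtranclp.rtrancl_into_rtrancl)
qed

lemma sim_bwd:
  assumes bwd: "\<And>q p y. q \<in> Q \<Longrightarrow> S (f q, p) y \<Longrightarrow> \<exists>q' p'. y = (f q', p') \<and> q' \<in> Q \<and> R (q,p) (q',p')"
  shows "S\<^sup>*\<^sup>* u v \<Longrightarrow> u = (f q, p) \<Longrightarrow> q \<in> Q \<Longrightarrow> \<exists>q' p'. v = (f q', p') \<and> q' \<in> Q \<and> R\<^sup>*\<^sup>* (q,p) (q',p')"
proof (induction rule: rtranclp_induct)
  case base then show ?case by blast
next
  case (step y z)
  then obtain q' p' where "y = (f q', p')" "q' \<in> Q" "R\<^sup>*\<^sup>* (q,p) (q',p')" by blast
  with bwd[of q' p' z] step(2) obtain q'' p'' where "z = (f q'', p'')" "q'' \<in> Q" "R (q',p') (q'',p'')" by blast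
  then show ?case using \<open>R\<^sup>*\<^sup>* (q,p) (q',p')\<close> by (blast intro: rtranclp.rtrancl_into_rtrancl)
qed

lemma sim_iff:
  assumes inj: "inj_on f Q"
  and fwd: "\<And>q p q' p'. q \<in> Q \<Longrightarrow> R (q,p) (q',p') \<Longrightarrow> q' \<in> Q \<and> S (f q, p) (f q', p')"
  and bwd: "\<And>q p y. q \<in> Q \<Longrightarrow> S (f q, p) y \<Longrightarrow> \<exists>q' p'. y = (f q', p') \<and> q' \<in> Q \<and> R (q,p) (q',p')"
  and "q0 \<in> Q" "qf \<in> Q"
  shows "S\<^sup>*\<^sup>* (f q0, p0) (f qf, pf) \<longleftrightarrow> R\<^sup>*\<^sup>* (q0,p0) (qf,pf)"
proof
  assume "S\<^sup>*\<^sup>* (f q0, p0) (f qf, pf)"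
  from sim_bwd[of Q S f R, OF bwd this refl \<open>q0 \<in> Q\<close>] obtain q' p' where
    "(f qf, pf) = (f q', p')" "q' \<in> Q" "R\<^sup>*\<^sup>* (q0,p0) (q',p')" by blast
  with inj \<open>qf \<in> Q\<close> show "R\<^sup>*\<^sup>* (q0,p0) (qf,pf)" by (auto dest: inj_onD)
next
  assume "R\<^sup>*\<^sup>* (q0,p0) (qf,pf)"
  from sim_fwd[of Q R S f, OF fwd this] \<open>q0 \<in> Q\<close> show "S\<^sup>*\<^sup>* (f q0, p0) (f qf, pf)" by simp
qed

lemma saa_transfer:
  assumes fin: "finite Q" and IQ: "I \<subseteq> Q" and FQ: "F \<subseteq> Q"
    and TQ: "\<forall>(q,a,q')\<in>Tr. q \<in> Q \<and> q' \<in> Q" and PQ: "\<forall>q\<in>Q. part q < n"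
  shows "\<exists>M::'a saa. saa_wf n M \<and> saa_lang n M = {ws. gsaa_acc n I F Tr part ws}"
proof -
  obtain f :: "_ \<Rightarrow> nat" and N where fQ: "f ` Q = {i. i < N}" and inj: "inj_on f Q"
    using finite_imp_inj_to_nat_seg[OF fin] by blast
  define M :: "'a saa" where "M = \<lparr>q_states = f ` Q, q_init = f ` I, q_final = f ` F,
     q_trans = (\<lambda>(q,a,q'). (f q, a, f q')) ` Tr, q_part = (\<lambda>x. part (inv_into Q f x))\<rparr>"
  have wf: "saa_wf n M" using fin IQ FQ TQ PQ inj unfolding M_def saa_wf_def by auto
  have tr: "(f q, a, x) \<in> q_trans M \<longleftrightarrow> (\<exists>q'. x = f q' \<and> (q, a, q') \<in> Tr)" if "q \<in> Q" for q a x
    using that TQ inj unfolding M_def by (auto dest: inj_onD intro: rev_image_eqI)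
  have pt: "q_part M (f q) = part q" if "q \<in> Q" for q
    using that inj unfolding M_def by simp
  have step: "(saa_step n M ws)\<^sup>*\<^sup>* (f q0, p0) (f qf, pf) \<longleftrightarrow> (gsaa_step n Tr part ws)\<^sup>*\<^sup>* (q0,p0) (qf,pf)"
    if "q0 \<in> Q" "qf \<in> Q" for ws q0 qf p0 pf
  proof (rule sim_iff[OF inj _ _ that])
    fix q p q' p' assume "q \<in> Q" "gsaa_step n Tr part ws (q, p) (q', p')"
    then show "q' \<in> Q \<and> saa_step n M ws (f q, p) (f q', p')"
      using TQ tr pt unfolding saa_step_def gsaa_step_def Let_def by fastforce
  next
    fix q p y assume "q \<in> Q" "saa_step n M ws (f q, p) y"
    then show "\<exists>q' p'. y = (f q', p') \<and> q' \<in> Q \<and> gsaa_step n Tr part ws (q, p) (q', p')"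
      using TQ tr pt unfolding saa_step_def gsaa_step_def Let_def
      by (cases y) fastforce
  qed
  have "saa_accepts n M ws \<longleftrightarrow> gsaa_acc n I F Tr part ws" for ws
  proof -
    have "saa_accepts n M ws \<longleftrightarrow> length ws = n \<and> (\<exists>q0\<in>I. \<exists>qf\<in>F. (saa_step n M ws)\<^sup>*\<^sup>* (f q0, replicate n 0) (f qf, map (\<lambda>w. Suc (length w)) ws))"
      unfolding saa_accepts_def M_def by simp
    also have "\<dots> \<longleftrightarrow> gsaa_acc n I F Tr part ws"
      unfolding gsaa_acc_def using step IQ FQ by blast
    finally show ?thesis .
  qed
  with wf show ?thesis unfolding saa_lang_def by blast
qed




lemma dfaa_transfer:
  fixes d :: "'q \<Rightarrow> 'a option list \<Rightarrow> 'q set \<times> nat set set"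
  assumes fin: "finite Q" and IQ: "I \<subseteq> Q" and FQ: "F \<subseteq> Q"
    and wfd: "\<forall>s\<in>Q. \<forall>\<sigma>\<in>padded_alphabet n.
       fst (d s \<sigma>) \<subseteq> Q \<and> snd (d s \<sigma>) \<subseteq> filters n \<and>
       (\<forall>i<n. \<sigma> ! i = None \<and> fst (d s \<sigma>) \<noteq> {} \<longrightarrow> (\<forall>\<chi>\<in>snd (d s \<sigma>). i \<notin> \<chi>)) \<and>
       card (snd (d s \<sigma>)) \<le> 1"
  shows "\<exists>M::'a faa. is_dfaa n M \<and> faa_lang n M = {ws. gfaa_acc n Q I F d ws}"
proof -
  obtain f :: "_ \<Rightarrow> nat" and N where fQ: "f ` Q = {i. i < N}" and inj: "inj_on f Q"
    using finite_imp_inj_to_nat_seg[OF fin] by blast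
  define M :: "'a faa" where "M = \<lparr>f_states = f ` Q, f_init = f ` I, f_final = f ` F,
     f_delta = (\<lambda>x \<sigma>. if x \<in> f ` Q then (f ` fst (d (inv_into Q f x) \<sigma>), snd (d (inv_into Q f x) \<sigma>)) else ({}, {}))\<rparr>"
  have dl: "f_delta M (f q) \<sigma> = (f ` fst (d q \<sigma>), snd (d q \<sigma>))" if "q \<in> Q" for q \<sigma>
    using that inj unfolding M_def by simp
  have st: "f_states M = f ` Q" unfolding M_def by simp
  have wf: "is_dfaa n M"
    unfolding is_dfaa_def faa_wf_def
  proof (intro conjI ballI)
    show "finite (f_states M)" using fin st by simp
    show "f_init M \<subseteq> f_states M" "f_final M \<subseteq> f_states M" using IQ FQ unfolding M_def by auto
  next
    fix s and \<sigma> :: "'a option list" assume s: "s \<in> f_states M" and \<sigma>: "\<sigma> \<in> padded_alphabet n"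
    then obtain q where q: "q \<in> Q" "s = f q" using st by auto
    have "fst (f_delta M s \<sigma>) \<subseteq> f_states M \<and> snd (f_delta M s \<sigma>) \<subseteq> filters n \<and>
          (\<forall>i<n. \<sigma> ! i = None \<and> fst (f_delta M s \<sigma>) \<noteq> {} \<longrightarrow> (\<forall>\<chi>\<in>snd (f_delta M s \<sigma>). i \<notin> \<chi>))"
      using wfd q \<sigma> dl st by (fastforce intro: imageI)
    then show "fst (f_delta M s \<sigma>) \<subseteq> f_states M" "snd (f_delta M s \<sigma>) \<subseteq> filters n"
      "\<forall>i<n. \<sigma> ! i = None \<and> fst (f_delta M s \<sigma>) \<noteq> {} \<longrightarrow> (\<forall>\<chi>\<in>snd (f_delta M s \<sigma>). i \<notin> \<chi>)"
      by auto
    show "card (snd (f_delta M s \<sigma>)) \<le> 1" using wfd q \<sigma> dl by auto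
  qed
  have step: "(faa_step n M ws)\<^sup>*\<^sup>* (f q0, p0) (f qf, pf) \<longleftrightarrow> (gfaa_step n Q d ws)\<^sup>*\<^sup>* (q0,p0) (qf,pf)"
    if "q0 \<in> Q" "qf \<in> Q" for ws q0 qf p0 pf
  proof (rule sim_iff[OF inj _ _ that])
    fix q p q' p' assume "q \<in> Q" "gfaa_step n Q d ws (q, p) (q', p')"
    then show "q' \<in> Q \<and> faa_step n M ws (f q, p) (f q', p')"
      using wfd dl st unfolding faa_step_def gfaa_step_def Let_def by fastforce
  next
    fix q p y assume "q \<in> Q" "faa_step n M ws (f q, p) y"
    then show "\<exists>q' p'. y = (f q', p') \<and> q' \<in> Q \<and> gfaa_step n Q d ws (q, p) (q', p')"
      using wfd dl st unfolding faa_step_def gfaa_step_def Let_def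
      by (cases y) fastforce
  qed
  have "faa_accepts n M ws \<longleftrightarrow> gfaa_acc n Q I F d ws" for ws
  proof -
    have "faa_accepts n M ws \<longleftrightarrow> length ws = n \<and> (\<exists>q0\<in>I. \<exists>qf\<in>F. (faa_step n M ws)\<^sup>*\<^sup>* (f q0, replicate n 0) (f qf, map length ws))"
      unfolding faa_accepts_def M_def by simp
    also have "\<dots> \<longleftrightarrow> gfaa_acc n Q I F d ws"
      unfolding gfaa_acc_def using step IQ FQ by blast
    finally show ?thesis .
  qed
  with wf show ?thesis unfolding faa_lang_def by blast
qed




datatype 'a st1 = Load nat "'a option list" | Main nat "'a option list" | Refill nat "'a option list" "nat list"

fun part1 :: "nat \<Rightarrow> 'a st1 \<Rightarrow> nat" where
  "part1 n (Load k b) = (if k < n then k else 0)"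
| "part1 n (Main s b) = 0"
| "part1 n (Refill t b (i # is)) = i"
| "part1 n (Refill t b []) = 0"

definition tr1 :: "nat \<Rightarrow> 'a faa \<Rightarrow> ('a st1 \<times> 'a option option \<times> 'a st1) set" where
"tr1 n M = {(Load k b, Some a, Load (Suc k) (b @ [a])) | k b a. k < n \<and> length b = k}
 \<union> {(Load n b, None, Main s b) | b s. length b = n \<and> s \<in> f_init M}
 \<union> {(Main s b, None, Refill t b (sorted_list_of_set \<chi>)) | s b \<chi> t. s \<in> f_states M \<and> b \<in> padded_alphabet n \<and>
       \<chi> \<in> snd (f_delta M s b) \<and> t \<in> fst (f_delta M s b)}
 \<union> {(Refill t b (i # is), Some a, Refill t (b[i := a]) is) | t b i is a. t \<in> f_states M \<and> length b = n \<and>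
       i < n \<and> set is \<subseteq> {..<n} \<and> length is < n}
 \<union> {(Refill t b [], None, Main t b) | t b. t \<in> f_states M \<and> length b = n}"

definition Q1 :: "nat \<Rightarrow> 'a faa \<Rightarrow> 'a st1 set" where
"Q1 n M = {Load k b | k b. k \<le> n \<and> length b = k}
  \<union> {Main s b | s b. s \<in> f_states M \<and> length b = n}
  \<union> {Refill t b is | t b is. t \<in> f_states M \<and> length b = n \<and> set is \<subseteq> {..<n} \<and> length is \<le> n}"

lemma finite_Q1:
  assumes "finite (f_states M)"
  shows "finite (Q1 n (M :: ('a::finite) faa))"
proof -
  have fb: "finite {b :: 'a option list. set b \<subseteq> UNIV \<and> length b \<le> n}"
    by (rule finite_lists_length_le) simp
  have fi: "finite {is :: nat list. set is \<subseteq> {..<n} \<and> length is \<le> n}"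
    by (rule finite_lists_length_le) simp
  have 1: "{Load k b | k b. k \<le> n \<and> length b = k} \<subseteq> (\<lambda>(k,b). Load k b) ` ({..n} \<times> {b. set b \<subseteq> UNIV \<and> length b \<le> n})"
    by auto
  have 2: "{Main s b | s b. s \<in> f_states M \<and> length b = n} \<subseteq> (\<lambda>(s,b). Main s b) ` (f_states M \<times> {b. set b \<subseteq> UNIV \<and> length b \<le> n})"
    by auto
  have 3: "{Refill t b is | t b is. t \<in> f_states M \<and> length b = n \<and> set is \<subseteq> {..<n} \<and> length is \<le> n}
     \<subseteq> (\<lambda>(t,b,is). Refill t b is) ` (f_states M \<times> {b. set b \<subseteq> UNIV \<and> length b \<le> n} \<times> {is :: nat list. set is \<subseteq> {..<n} \<and> length is \<le> n})"
    by (auto simp: image_iff)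
  show ?thesis unfolding Q1_def
    using finite_subset[OF 1] finite_subset[OF 2] finite_subset[OF 3] fb fi assms by auto
qed

lemma tr1_Q1:
  assumes wf: "faa_wf n M"
  shows "\<forall>(q,a,q')\<in>tr1 n M. q \<in> Q1 n M \<and> q' \<in> Q1 n M"
proof -
  have "q \<in> Q1 n M \<and> q' \<in> Q1 n M" if "(q,a,q') \<in> tr1 n M" for q a q'
  proof -
    have card: "length (sorted_list_of_set \<chi>) \<le> n" if "\<chi> \<subseteq> {..<n}" for \<chi>
      using that by (metis card_lessThan card_mono finite_lessThan length_sorted_list_of_set)
    have fin: "\<chi> \<in> filters n \<Longrightarrow> finite \<chi> \<and> \<chi> \<subseteq> {..<n}" for \<chi>
      unfolding filters_def using finite_subset by auto
    have wf1: "\<And>s \<sigma>. s \<in> f_states M \<Longrightarrow> \<sigma> \<in> padded_alphabet n \<Longrightarrow> fst (f_delta M s \<sigma>) \<subseteq> f_states M \<and> snd (f_delta M s \<sigma>) \<subseteq> filters n"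
      using wf unfolding faa_wf_def by blast
    have ini: "f_init M \<subseteq> f_states M" using wf unfolding faa_wf_def by blast
    have pl: "\<And>b. b \<in> padded_alphabet n \<Longrightarrow> length b = n" unfolding padded_alphabet_def by auto
    from that show ?thesis unfolding tr1_def
    proof (elim UnE)
      assume "(q, a, q') \<in> {(Load k b, Some a, Load (Suc k) (b @ [a])) |k b a. k < n \<and> length b = k}"
      then show ?thesis unfolding Q1_def by auto
    next
      assume "(q, a, q') \<in> {(Load n b, None, Main s b) |b s. length b = n \<and> s \<in> f_init M}"
      then show ?thesis using ini unfolding Q1_def by auto
    next
      assume "(q, a, q') \<in> {(Main s b, None, Refill t b (sorted_list_of_set \<chi>)) |s b \<chi> t.
        s \<in> f_states M \<and> b \<in> padded_alphabet n \<and> \<chi> \<in> snd (f_delta M s b) \<and> t \<in> fst (f_delta M s b)}"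
      then obtain s b \<chi> t where e: "q = Main s b" "q' = Refill t b (sorted_list_of_set \<chi>)" "s \<in> f_states M"
        "b \<in> padded_alphabet n" "\<chi> \<in> snd (f_delta M s b)" "t \<in> fst (f_delta M s b)" by blast
      then have "t \<in> f_states M" "\<chi> \<in> filters n" using wf1 by blast+
      with e show ?thesis using fin card pl unfolding Q1_def by auto
    next
      assume "(q, a, q') \<in> {(Refill t b (i # is), Some a, Refill t (b[i := a]) is) |t b i is a.
        t \<in> f_states M \<and> length b = n \<and> i < n \<and> set is \<subseteq> {..<n} \<and> length is < n}"
      then show ?thesis unfolding Q1_def by auto
    next
      assume "(q, a, q') \<in> {(Refill t b [], None, Main t b) |t b. t \<in> f_states M \<and> length b = n}"
      then show ?thesis unfolding Q1_def by auto
    qed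
  qed
  then show ?thesis by auto
qed




lemma tr1_Load_Some: "(Load k b, Some a, q') \<in> tr1 n M \<longleftrightarrow> k < n \<and> length b = k \<and> q' = Load (Suc k) (b@[a])"
  by (auto simp: tr1_def)
lemma tr1_Load_None: "(Load k b, None, q') \<in> tr1 n M \<longleftrightarrow> k = n \<and> length b = n \<and> (\<exists>s\<in>f_init M. q' = Main s b)"
  by (auto simp: tr1_def)
lemma tr1_Main_Some: "(Main s b, Some a, q') \<notin> tr1 n M"
  by (auto simp: tr1_def)
lemma tr1_Main_None: "(Main s b, None, q') \<in> tr1 n M \<longleftrightarrow> s \<in> f_states M \<and> b \<in> padded_alphabet n \<and>
   (\<exists>\<chi> t. \<chi> \<in> snd (f_delta M s b) \<and> t \<in> fst (f_delta M s b) \<and> q' = Refill t b (sorted_list_of_set \<chi>))"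
  by (auto simp: tr1_def)
lemma tr1_Refill_Some: "(Refill t b is, Some a, q') \<in> tr1 n M \<longleftrightarrow> (\<exists>i is'. is = i # is' \<and> t \<in> f_states M \<and> length b = n \<and>
   i < n \<and> set is' \<subseteq> {..<n} \<and> length is' < n \<and> q' = Refill t (b[i := a]) is')"
  by (auto simp: tr1_def)
lemma tr1_Refill_None: "(Refill t b is, None, q') \<in> tr1 n M \<longleftrightarrow> is = [] \<and> t \<in> f_states M \<and> length b = n \<and> q' = Main t b"
  by (auto simp: tr1_def)

lemma gsaa_letter: "(q, Some a, q') \<in> Tr \<Longrightarrow> part q = i \<Longrightarrow> i < n \<Longrightarrow> p!i \<le> length (ws!i) \<Longrightarrow>
  a = (if p!i < length (ws!i) then Some (ws!i!(p!i)) else None) \<Longrightarrow> p' = p[i := Suc (p!i)] \<Longrightarrow>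
  gsaa_step n Tr part ws (q,p) (q',p')"
  unfolding gsaa_step_def Let_def by auto

lemma gsaa_eps: "(q, None, q') \<in> Tr \<Longrightarrow> gsaa_step n Tr part ws (q,p) (q',p)"
  unfolding gsaa_step_def Let_def by auto

lemma faa_wf_all: "faa_wf n M \<Longrightarrow> (\<forall>s\<in>f_states M. \<forall>\<sigma>\<in>padded_alphabet n.
       fst (f_delta M s \<sigma>) \<subseteq> f_states M \<and> snd (f_delta M s \<sigma>) \<subseteq> filters n \<and>
       (\<forall>i<n. \<sigma> ! i = None \<and> fst (f_delta M s \<sigma>) \<noteq> {} \<longrightarrow>
          (\<forall>\<chi>\<in>snd (f_delta M s \<sigma>). i \<notin> \<chi>)))"
  unfolding faa_wf_def by (elim conjE) assumption

lemma faa_wfD1: "faa_wf n M \<Longrightarrow> s \<in> f_states M \<Longrightarrow> \<sigma> \<in> padded_alphabet n \<Longrightarrow> fst (f_delta M s \<sigma>) \<subseteq> f_states M"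
  by (drule faa_wf_all) (drule bspec, assumption, drule bspec, assumption, elim conjE, assumption)
lemma faa_wfD2: "faa_wf n M \<Longrightarrow> s \<in> f_states M \<Longrightarrow> \<sigma> \<in> padded_alphabet n \<Longrightarrow> snd (f_delta M s \<sigma>) \<subseteq> filters n"
  by (drule faa_wf_all) (drule bspec, assumption, drule bspec, assumption, elim conjE, assumption)
lemma faa_wfD3: "faa_wf n M \<Longrightarrow> s \<in> f_states M \<Longrightarrow> \<sigma> \<in> padded_alphabet n \<Longrightarrow> i < n \<Longrightarrow> \<sigma> ! i = None \<Longrightarrow>
   t \<in> fst (f_delta M s \<sigma>) \<Longrightarrow> \<chi> \<in> snd (f_delta M s \<sigma>) \<Longrightarrow> i \<notin> \<chi>"
  apply (drule faa_wf_all)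
  apply (drule bspec, assumption, drule bspec, assumption, elim conjE)
  apply (drule spec[of _ i])
  apply blast
  done
lemma faa_wf_init: "faa_wf n M \<Longrightarrow> f_init M \<subseteq> f_states M"
  unfolding faa_wf_def by (elim conjE) assumption

lemmas tr1_simps = tr1_Load_Some tr1_Load_None tr1_Main_Some tr1_Main_None tr1_Refill_Some tr1_Refill_None

context
  fixes n :: nat and M :: "'a faa" and ws :: "'a list list"
  assumes wf: "faa_wf n M" and lws: "length ws = n"
begin

abbreviation "SS \<equiv> gsaa_step n (tr1 n M) (part1 n) ws"
abbreviation "FS \<equiv> faa_step n M ws"

lemma wf_nonempty: "s \<in> f_states M \<Longrightarrow> cur_sym ws p \<in> padded_alphabet n \<Longrightarrow> \<chi> \<in> snd (f_delta M s (cur_sym ws p))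
  \<Longrightarrow> t \<in> fst (f_delta M s (cur_sym ws p)) \<Longrightarrow> i \<in> \<chi> \<Longrightarrow> i < n \<and> p ! i < length (ws ! i)"
proof -
  assume a: "s \<in> f_states M" "cur_sym ws p \<in> padded_alphabet n" "\<chi> \<in> snd (f_delta M s (cur_sym ws p))"
    "t \<in> fst (f_delta M s (cur_sym ws p))" "i \<in> \<chi>"
  then have "\<chi> \<in> filters n" using faa_wfD2[OF wf a(1,2)] by blast
  then have i: "i < n" using a(5) unfolding filters_def by auto
  have "\<not> (cur_sym ws p ! i = None)" using faa_wfD3[OF wf a(1,2) i _ a(4,3)] a(5) by blast
  then show ?thesis using i lws by (auto split: if_splits)
qed

lemma filt_fin: "s \<in> f_states M \<Longrightarrow> \<sigma> \<in> padded_alphabet n \<Longrightarrow> \<chi> \<in> snd (f_delta M s \<sigma>) \<Longrightarrow> finite \<chi> \<and> \<chi> \<subseteq> {..<n}"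
proof -
  assume a: "s \<in> f_states M" "\<sigma> \<in> padded_alphabet n" "\<chi> \<in> snd (f_delta M s \<sigma>)"
  have "snd (f_delta M s \<sigma>) \<subseteq> filters n" using faa_wfD2[OF wf a(1,2)] .
  with a(3) have "\<chi> \<subseteq> {..<n}" unfolding filters_def by blast
  then show ?thesis using finite_subset by blast
qed

lemma load_run: "k \<le> n \<Longrightarrow> SS\<^sup>*\<^sup>* (Load 0 [], replicate n 0)
   (Load k (take k (cur_sym ws (replicate n 0))), map (\<lambda>i. if i < k then 1 else 0) [0..<n])"
proof (induction k)
  case 0
  then show ?case by (simp add: map_replicate_const)
next
  case (Suc k)
  let ?s = "cur_sym ws (replicate n 0)"
  have k: "k < n" using Suc by simp
  have "SS (Load k (take k ?s), map (\<lambda>i. if i < k then 1 else 0) [0..<n])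
           (Load (Suc k) (take (Suc k) ?s), map (\<lambda>i. if i < Suc k then 1 else 0) [0..<n])"
  proof -
    have e1: "take (Suc k) ?s = take k ?s @ [?s ! k]" using k lws by (simp add: take_Suc_conv_app_nth)
    have e2: "(map (\<lambda>i. if i < k then 1 else 0) [0..<n])[k := Suc 0] = map (\<lambda>i. if i < Suc k then 1 else 0) [0..<n]"
      by (rule nth_equalityI) (auto simp: nth_list_update less_Suc_eq)
    have 1: "(Load k (take k ?s), Some (?s ! k), Load (Suc k) (take (Suc k) ?s)) \<in> tr1 n M"
      unfolding e1 using k lws by (simp add: tr1_simps)
    have 2: "map (\<lambda>i. if i < k then 1 else 0) [0..<n] ! k = (0::nat)" using k by simp
    have 3: "part1 n (Load k (take k ?s)) = k" using k by simp
    have 4: "?s ! k = (if 0 < length (ws!k) then Some (ws!k!0) else None)" using k lws by simp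
    show ?thesis
      by (rule gsaa_letter[where part="part1 n" and ws=ws, OF 1 3 k])
        (simp_all only: 2 4 e2 le0)
  qed
  with Suc show ?case by (meson Suc_leD rtranclp.rtrancl_into_rtrancl)
qed

lemma refill_run: "distinct is \<Longrightarrow> set is \<inter> D = {} \<Longrightarrow> (\<forall>i\<in>set is \<union> D. i < n \<and> p!i < length (ws!i)) \<Longrightarrow>
  length p = n \<Longrightarrow> t \<in> f_states M \<Longrightarrow>
  SS\<^sup>*\<^sup>* (Refill t (cur_sym ws (advance D p)) is, map Suc (advance D p))
        (Refill t (cur_sym ws (advance (D \<union> set is) p)) [], map Suc (advance (D \<union> set is) p))"
proof (induction "is" arbitrary: D)
  case Nil then show ?case by simp
next
  case (Cons i "is")
  have i: "i < n" "p!i < length (ws!i)" "i \<notin> D" using Cons.prems by auto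
  have len: "length (i # is) \<le> n"
  proof -
    have "set (i#is) \<subseteq> {..<n}" using Cons.prems by auto
    then have "card (set (i#is)) \<le> n" by (metis card_lessThan card_mono finite_lessThan)
    then show ?thesis using Cons.prems(1) by (metis distinct_card)
  qed
  have st: "SS (Refill t (cur_sym ws (advance D p)) (i # is), map Suc (advance D p))
     (Refill t (cur_sym ws (advance (insert i D) p)) is, map Suc (advance (insert i D) p))"
  proof -
    let ?a = "if Suc (p!i) < length (ws!i) then Some (ws!i!(Suc (p!i))) else None"
    have e1: "(cur_sym ws (advance D p))[i := ?a] = cur_sym ws (advance (insert i D) p)"
      using i lws Cons.prems(4) by (intro nth_equalityI) (auto simp: nth_list_update)
    have e2: "(map Suc (advance D p))[i := Suc (Suc (p!i))] = map Suc (advance (insert i D) p)"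
      using i lws Cons.prems(4) by (intro nth_equalityI) (auto simp: nth_list_update)
    have "set is \<subseteq> {..<n}" using Cons.prems by auto
    then have "(Refill t (cur_sym ws (advance D p)) (i # is), Some ?a, Refill t ((cur_sym ws (advance D p))[i := ?a]) is) \<in> tr1 n M"
      using i lws len Cons.prems(4,5) by (simp add: tr1_simps)
    moreover have "map Suc (advance D p) ! i = Suc (p!i)" using i Cons.prems(4) by simp
    moreover have "part1 n (Refill t (cur_sym ws (advance D p)) (i # is)) = i" by simp
    ultimately show ?thesis unfolding gsaa_step_def Let_def fst_conv snd_conv
      using i e1 e2 by (intro disjI2 exI[of _ ?a]) simp
  qed
  have IH': "SS\<^sup>*\<^sup>* (Refill t (cur_sym ws (advance (insert i D) p)) is, map Suc (advance (insert i D) p))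
        (Refill t (cur_sym ws (advance (insert i D \<union> set is) p)) [], map Suc (advance (insert i D \<union> set is) p))"
    using Cons by (intro Cons.IH) auto
  have eq: "D \<union> set (i # is) = insert i D \<union> set is" by auto
  show ?case unfolding eq using converse_rtranclp_into_rtranclp[where r=SS, OF st IH'] .
qed

lemma main_run: "FS\<^sup>*\<^sup>* (s0, replicate n 0) (s, p) \<Longrightarrow>
  SS\<^sup>*\<^sup>* (Main s0 (cur_sym ws (replicate n 0)), map Suc (replicate n 0)) (Main s (cur_sym ws p), map Suc p) \<and> length p = n"
proof (induction rule: rtranclp_induct2)
  case refl then show ?case by simp
next
  case (step s p t p')
  then have IH: "SS\<^sup>*\<^sup>* (Main s0 (cur_sym ws (replicate n 0)), map Suc (replicate n 0)) (Main s (cur_sym ws p), map Suc p)"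
    and lp: "length p = n" by auto
  from step(2) obtain \<chi> where fs: "s \<in> f_states M" "cur_sym ws p \<in> padded_alphabet n"
    "\<chi> \<in> snd (f_delta M s (cur_sym ws p))" "t \<in> fst (f_delta M s (cur_sym ws p))" "p' = advance \<chi> p"
    unfolding faa_step_def Let_def by auto
  have tst: "t \<in> f_states M" using faa_wfD1[OF wf fs(1,2)] fs(4) by blast
  have fc: "finite \<chi>" using filt_fin fs by blast
  have s1: "SS (Main s (cur_sym ws p), map Suc p) (Refill t (cur_sym ws p) (sorted_list_of_set \<chi>), map Suc p)"
    unfolding gsaa_step_def Let_def using fs by (auto simp: tr1_simps)
  have s2: "SS\<^sup>*\<^sup>* (Refill t (cur_sym ws (advance {} p)) (sorted_list_of_set \<chi>), map Suc (advance {} p))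
     (Refill t (cur_sym ws (advance ({} \<union> set (sorted_list_of_set \<chi>)) p)) [], map Suc (advance ({} \<union> set (sorted_list_of_set \<chi>)) p))"
    using wf_nonempty[OF fs(1-4)] fc lp tst by (intro refill_run) auto
  have s3: "SS (Refill t (cur_sym ws (advance \<chi> p)) [], map Suc (advance \<chi> p)) (Main t (cur_sym ws (advance \<chi> p)), map Suc (advance \<chi> p))"
    unfolding gsaa_step_def Let_def using tst lws by (auto simp: tr1_simps)
  from s2 fc have s2': "SS\<^sup>*\<^sup>* (Refill t (cur_sym ws p) (sorted_list_of_set \<chi>), map Suc p)
     (Refill t (cur_sym ws (advance \<chi> p)) [], map Suc (advance \<chi> p))" by simp
  have "SS\<^sup>*\<^sup>* (Main s (cur_sym ws p), map Suc p) (Main t (cur_sym ws p'), map Suc p')"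
    using s1 s2' s3 fs(5) by (meson converse_rtranclp_into_rtranclp rtranclp.rtrancl_into_rtrancl)
  with IH lp fs(5) show ?case by simp
qed

end



lemma gsaa_stepD: "gsaa_step n Tr part ws (q,P) (q',P') \<Longrightarrow> ((q,None,q') \<in> Tr \<and> P' = P) \<or>
  (\<exists>a. (q, Some a, q') \<in> Tr \<and> part q < n \<and> P ! (part q) \<le> length (ws ! part q) \<and>
    a = (if P ! part q < length (ws ! part q) then Some (ws ! part q ! (P ! part q)) else None) \<and>
    P' = P[part q := Suc (P ! part q)])"
  by (simp add: gsaa_step_def Let_def)

lemma lp_n: "map (\<lambda>i. if i < n then 1 else 0) [0..<n] = map Suc (replicate n (0::nat))"
  by (rule nth_equalityI) auto

context
  fixes n :: nat and M :: "'a faa" and ws :: "'a list list"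
  assumes wf: "faa_wf n M" and lws: "length ws = n"
begin

abbreviation "SS1 \<equiv> gsaa_step n (tr1 n M) (part1 n) ws"
abbreviation "FS1 \<equiv> faa_step n M ws"

definition inv1 :: "'a st1 \<times> nat list \<Rightarrow> bool" where
"inv1 c \<longleftrightarrow> (case c of (q, P) \<Rightarrow> (case q of
   Load k b \<Rightarrow> k \<le> n \<and> b = take k (cur_sym ws (replicate n 0)) \<and> P = map (\<lambda>i. if i < k then 1 else 0) [0..<n]
 | Main s b \<Rightarrow> (\<exists>p. length p = n \<and> (\<forall>i<n. p!i \<le> length (ws!i)) \<and> P = map Suc p \<and> b = cur_sym ws p \<and>
      (\<exists>s0\<in>f_init M. FS1\<^sup>*\<^sup>* (s0, replicate n 0) (s,p)))
 | Refill t b is \<Rightarrow> (\<exists>p s \<chi>. length p = n \<and> (\<forall>i<n. p!i \<le> length (ws!i)) \<and>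
      (\<exists>s0\<in>f_init M. FS1\<^sup>*\<^sup>* (s0, replicate n 0) (s,p)) \<and> s \<in> f_states M \<and>
      cur_sym ws p \<in> padded_alphabet n \<and> \<chi> \<in> snd (f_delta M s (cur_sym ws p)) \<and>
      t \<in> fst (f_delta M s (cur_sym ws p)) \<and> distinct is \<and> set is \<subseteq> \<chi> \<and>
      b = cur_sym ws (advance (\<chi> - set is) p) \<and> P = map Suc (advance (\<chi> - set is) p))))"

lemma inv1_Load: "inv1 (Load k b, P) \<longleftrightarrow> k \<le> n \<and> b = take k (cur_sym ws (replicate n 0)) \<and> P = map (\<lambda>i. if i < k then 1 else 0) [0..<n]"
  by (simp add: inv1_def)
lemma inv1_Main: "inv1 (Main s b, P) \<longleftrightarrow> (\<exists>p. length p = n \<and> (\<forall>i<n. p!i \<le> length (ws!i)) \<and> P = map Suc p \<and> b = cur_sym ws p \<and>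
      (\<exists>s0\<in>f_init M. FS1\<^sup>*\<^sup>* (s0, replicate n 0) (s,p)))"
  by (simp add: inv1_def)
lemma inv1_Refill: "inv1 (Refill t b is, P) \<longleftrightarrow> (\<exists>p s \<chi>. length p = n \<and> (\<forall>i<n. p!i \<le> length (ws!i)) \<and>
      (\<exists>s0\<in>f_init M. FS1\<^sup>*\<^sup>* (s0, replicate n 0) (s,p)) \<and> s \<in> f_states M \<and>
      cur_sym ws p \<in> padded_alphabet n \<and> \<chi> \<in> snd (f_delta M s (cur_sym ws p)) \<and>
      t \<in> fst (f_delta M s (cur_sym ws p)) \<and> distinct is \<and> set is \<subseteq> \<chi> \<and>
      b = cur_sym ws (advance (\<chi> - set is) p) \<and> P = map Suc (advance (\<chi> - set is) p))"
  by (simp add: inv1_def)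

lemma inv1_step: "inv1 (q,P) \<Longrightarrow> SS1 (q,P) (q',P') \<Longrightarrow> inv1 (q',P')"
proof (cases q)
  case (Load k b)
  assume inv: "inv1 (q,P)" and st: "SS1 (q,P) (q',P')"
  let ?s = "cur_sym ws (replicate n 0)"
  from inv Load have k: "k \<le> n" and b: "b = take k ?s" and P: "P = map (\<lambda>i. if i < k then 1 else 0) [0..<n]"
    by (auto simp: inv1_Load)
  from gsaa_stepD[OF st] show ?thesis
  proof (elim disjE exE conjE)
    assume "(q, None, q') \<in> tr1 n M" "P' = P"
    then obtain s where "k = n" "length b = n" "s \<in> f_init M" "q' = Main s b" using Load by (auto simp: tr1_simps)
    moreover have "b = cur_sym ws (replicate n 0)" using b \<open>k = n\<close> lws by simp
    ultimately have "inv1 (Main s b, P)" unfolding inv1_Main using P lp_n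
      by (intro exI[of _ "replicate n 0"]) auto
    then show ?thesis using \<open>P' = P\<close> \<open>q' = Main s b\<close> by simp
  next
    fix a assume tr: "(q, Some a, q') \<in> tr1 n M" and pk: "part1 n q < n"
      and a: "a = (if P ! part1 n q < length (ws ! part1 n q) then Some (ws ! part1 n q ! (P ! part1 n q)) else None)"
      and P': "P' = P[part1 n q := Suc (P ! part1 n q)]"
    from tr Load have kn: "k < n" and q': "q' = Load (Suc k) (b @ [a])" by (auto simp: tr1_simps)
    have pq: "part1 n q = k" using Load kn by simp
    have Pk: "P ! k = 0" using P kn by simp
    have "a = ?s ! k" using a pq Pk kn lws by simp
    then have e1: "b @ [a] = take (Suc k) ?s" using b kn lws by (simp add: take_Suc_conv_app_nth)
    have e2: "P' = map (\<lambda>i. if i < Suc k then 1 else 0) [0..<n]"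
      unfolding P' pq Pk P by (rule nth_equalityI) (auto simp: nth_list_update less_Suc_eq)
    show ?thesis unfolding q' inv1_Load using e1 e2 kn by simp
  qed
next
  case (Main s b)
  assume inv: "inv1 (q,P)" and st: "SS1 (q,P) (q',P')"
  from inv Main obtain p s0 where p: "length p = n" "\<forall>i<n. p!i \<le> length (ws!i)" "P = map Suc p" "b = cur_sym ws p"
    "s0 \<in> f_init M" "FS1\<^sup>*\<^sup>* (s0, replicate n 0) (s,p)" by (auto simp: inv1_Main)
  from gsaa_stepD[OF st] Main have "(q, None, q') \<in> tr1 n M \<and> P' = P" by (auto simp: tr1_simps)
  then obtain \<chi> t where tr: "s \<in> f_states M" "b \<in> padded_alphabet n" "\<chi> \<in> snd (f_delta M s b)"
     "t \<in> fst (f_delta M s b)" "q' = Refill t b (sorted_list_of_set \<chi>)" "P' = P"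
    using Main by (auto simp: tr1_simps)
  have fc: "finite \<chi>" using filt_fin[OF wf lws tr(1-3)] by blast
  show ?thesis unfolding tr(5) inv1_Refill
    apply (rule exI[of _ p], rule exI[of _ s], rule exI[of _ \<chi>])
    using p tr fc by auto
next
  case (Refill t b "is")
  assume inv: "inv1 (q,P)" and st: "SS1 (q,P) (q',P')"
  from inv[unfolded Refill inv1_Refill] obtain p s \<chi> s0 where p: "length p = n" "\<forall>i<n. p!i \<le> length (ws!i)"
    "s0 \<in> f_init M" "FS1\<^sup>*\<^sup>* (s0, replicate n 0) (s,p)" "s \<in> f_states M"
    "cur_sym ws p \<in> padded_alphabet n" "\<chi> \<in> snd (f_delta M s (cur_sym ws p))"
    "t \<in> fst (f_delta M s (cur_sym ws p))" "distinct is" "set is \<subseteq> \<chi>"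
    "b = cur_sym ws (advance (\<chi> - set is) p)" "P = map Suc (advance (\<chi> - set is) p)"
    by blast
  have nonempty: "\<And>i. i \<in> \<chi> \<Longrightarrow> i < n \<and> p ! i < length (ws ! i)"
    using wf_nonempty[OF wf lws p(5-8)] by blast
  from gsaa_stepD[OF st] show ?thesis
  proof (elim disjE exE conjE)
    assume "(q, None, q') \<in> tr1 n M" "P' = P"
    then have e: "is = []" "q' = Main t b" using Refill by (auto simp: tr1_simps)
    have fs: "FS1 (s,p) (t, advance \<chi> p)" unfolding faa_step_def Let_def using p by auto
    have a1: "length (advance \<chi> p) = n" using p by simp
    have a2: "\<forall>i<n. advance \<chi> p ! i \<le> length (ws ! i)"
      using p nonempty by (auto simp: Suc_le_eq)
    have a3: "P' = map Suc (advance \<chi> p)" "b = cur_sym ws (advance \<chi> p)" using p e \<open>P' = P\<close> by auto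
    have a4: "FS1\<^sup>*\<^sup>* (s0, replicate n 0) (t, advance \<chi> p)" using p(4) fs by (rule rtranclp.rtrancl_into_rtrancl)
    show ?thesis unfolding e inv1_Main using a1 a2 a3 a4 p(3) by blast
  next
    fix a assume tr: "(q, Some a, q') \<in> tr1 n M" and pk: "part1 n q < n"
      and le: "P ! part1 n q \<le> length (ws ! part1 n q)"
      and a: "a = (if P ! part1 n q < length (ws ! part1 n q) then Some (ws ! part1 n q ! (P ! part1 n q)) else None)"
      and P': "P' = P[part1 n q := Suc (P ! part1 n q)]"
    from tr Refill obtain i is' where e: "is = i # is'" "i < n" "q' = Refill t (b[i := a]) is'"
      by (auto simp: tr1_simps)
    have pq: "part1 n q = i" using Refill e by simp
    define D where "D = \<chi> - set is"
    have iD: "i \<notin> D" "i \<in> \<chi>" using e p(10) unfolding D_def by auto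
    have D': "\<chi> - set is' = insert i D" using e p(9,10) unfolding D_def by auto
    have Pi: "P ! i = Suc (p ! i)" using p(1,12) e iD unfolding D_def by simp
    have e1: "b[i := a] = cur_sym ws (advance (insert i D) p)"
      unfolding p(11) a pq Pi using e(2) p(1) lws iD
      by (intro nth_equalityI) (auto simp: nth_list_update D_def)
    have e2: "P' = map Suc (advance (insert i D) p)"
      unfolding P' pq Pi p(12) using e(2) p(1) iD
      by (intro nth_equalityI) (auto simp: nth_list_update D_def)
    show ?thesis unfolding e(3) inv1_Refill
      apply (rule exI[of _ p], rule exI[of _ s], rule exI[of _ \<chi>])
      using p e1 e2 D' e(1) by auto
  qed
qed

lemma inv1_reach: "SS1\<^sup>*\<^sup>* (Load 0 [], replicate n 0) c \<Longrightarrow> inv1 c"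
proof (induction rule: rtranclp_induct)
  case base
  have "replicate n 0 = map (\<lambda>i. if i < 0 then 1 else 0) [0..<n]"
    by (simp add: map_replicate_const)
  then show ?case by (simp add: inv1_Load)
next
  case (step y z) then show ?case using inv1_step by (metis prod.collapse)
qed

lemma lang1: "gsaa_acc n {Load 0 []} {Main s b | s b. s \<in> f_final M \<and> length b = n} (tr1 n M) (part1 n) ws \<longleftrightarrow> faa_accepts n M ws"
proof
  assume "gsaa_acc n {Load 0 []} {Main s b | s b. s \<in> f_final M \<and> length b = n} (tr1 n M) (part1 n) ws"
  then obtain sf b where sf: "sf \<in> f_final M" and run: "SS1\<^sup>*\<^sup>* (Load 0 [], replicate n 0) (Main sf b, map (\<lambda>w. Suc (length w)) ws)"
    unfolding gsaa_acc_def by blast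
  from inv1_reach[OF run] obtain p s0 where p: "map (\<lambda>w. Suc (length w)) ws = map Suc p" "s0 \<in> f_init M"
    "FS1\<^sup>*\<^sup>* (s0, replicate n 0) (sf, p)" unfolding inv1_Main by blast
  have "map Suc (map length ws) = map Suc p" using p(1) by (simp add: comp_def)
  then have "p = map length ws" by (metis inj_Suc inj_map_eq_map)
  then show "faa_accepts n M ws" unfolding faa_accepts_def using lws p sf by blast
next
  assume "faa_accepts n M ws"
  then obtain s0 sf where s: "s0 \<in> f_init M" "sf \<in> f_final M" "FS1\<^sup>*\<^sup>* (s0, replicate n 0) (sf, map length ws)"
    unfolding faa_accepts_def by blast
  let ?s = "cur_sym ws (replicate n 0)"
  have r1: "SS1\<^sup>*\<^sup>* (Load 0 [], replicate n 0) (Load n ?s, map Suc (replicate n 0))"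
    using load_run[OF wf lws, of n] lws by (simp add: lp_n)
  have r2: "SS1 (Load n ?s, map Suc (replicate n 0)) (Main s0 ?s, map Suc (replicate n 0))"
    by (rule gsaa_eps) (simp add: tr1_simps s(1) lws)
  have r3: "SS1\<^sup>*\<^sup>* (Main s0 ?s, map Suc (replicate n 0)) (Main sf (cur_sym ws (map length ws)), map Suc (map length ws))"
    using main_run[OF wf lws s(3)] by blast
  have run: "SS1\<^sup>*\<^sup>* (Load 0 [], replicate n 0) (Main sf (cur_sym ws (map length ws)), map (\<lambda>w. Suc (length w)) ws)"
  proof -
    have eq: "map Suc (map length ws) = map (\<lambda>w. Suc (length w)) ws" by simp
    show ?thesis using rtranclp_trans[OF rtranclp.rtrancl_into_rtrancl[OF r1 r2] r3] unfolding eq .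
  qed
  then show "gsaa_acc n {Load 0 []} {Main s b | s b. s \<in> f_final M \<and> length b = n} (tr1 n M) (part1 n) ws"
  proof -
    have "Main sf (cur_sym ws (map length ws)) \<in> {Main s b | s b. s \<in> f_final M \<and> length b = n}"
      using s(2) lws by simp
    then show ?thesis unfolding gsaa_acc_def using lws run by blast
  qed
qed

end

lemma faa_to_saa:
  fixes M :: "('a::finite) faa"
  assumes wf: "faa_wf n M" and n: "n \<ge> 1"
  shows "\<exists>M'::'a saa. saa_wf n M' \<and> saa_lang n M' = faa_lang n M"
proof -
  have fin: "finite (f_states M)" using wf unfolding faa_wf_def by (elim conjE)
  have "\<exists>M'::'a saa. saa_wf n M' \<and> saa_lang n M' = {ws. gsaa_acc n {Load 0 []} {Main s b | s b. s \<in> f_final M \<and> length b = n} (tr1 n M) (part1 n) ws}"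
  proof (rule saa_transfer[where Q="Q1 n M"])
    show "finite (Q1 n M)" using finite_Q1[OF fin] .
    show "{Load 0 []} \<subseteq> Q1 n M" unfolding Q1_def by auto
    have "f_final M \<subseteq> f_states M" using wf unfolding faa_wf_def by (elim conjE)
    then show "{Main s b | s b. s \<in> f_final M \<and> length b = n} \<subseteq> Q1 n M" unfolding Q1_def by auto
    show "\<forall>(q, a, q')\<in>tr1 n M. q \<in> Q1 n M \<and> q' \<in> Q1 n M" using tr1_Q1[OF wf] .
    show "\<forall>q\<in>Q1 n M. part1 n q < n"
    proof
      fix q assume "q \<in> Q1 n M"
      then show "part1 n q < n" using n unfolding Q1_def
        by (cases "(n,q)" rule: part1.cases) auto
    qed
  qed
  moreover have "{ws. gsaa_acc n {Load 0 []} {Main s b | s b. s \<in> f_final M \<and> length b = n} (tr1 n M) (part1 n) ws} = faa_lang n M"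
  proof -
    have "gsaa_acc n {Load 0 []} {Main s b | s b. s \<in> f_final M \<and> length b = n} (tr1 n M) (part1 n) ws \<longleftrightarrow> faa_accepts n M ws" for ws
    proof (cases "length ws = n")
      case True then show ?thesis using lang1[OF wf True] by blast
    next
      case False then show ?thesis unfolding gsaa_acc_def faa_accepts_def by blast
    qed
    then show ?thesis unfolding faa_lang_def by blast
  qed
  ultimately show ?thesis by simp
qed




definition clos :: "'a saa \<Rightarrow> nat \<Rightarrow> 'a option list \<Rightarrow> nat \<times> nat set \<Rightarrow> nat \<times> nat set \<Rightarrow> bool" where
"clos M n \<sigma> c c' \<longleftrightarrow> (let q = fst c; D = snd c; q' = fst c'; D' = snd c' in
   ((q, None, q') \<in> q_trans M \<and> D' = D) \<or>
   (q_part M q < n \<and> q_part M q \<notin> D \<and> \<sigma> ! q_part M q = None \<and> (q, Some None, q') \<in> q_trans M \<and> D' = insert (q_part M q) D))"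

definition Q2 :: "'a saa \<Rightarrow> nat \<Rightarrow> (nat \<times> nat set \<times> nat) set" where
"Q2 M n = q_states M \<times> Pow {..<n} \<times> {..<n}"

definition d2 :: "'a saa \<Rightarrow> nat \<Rightarrow> nat \<times> nat set \<times> nat \<Rightarrow> 'a option list \<Rightarrow> (nat \<times> nat set \<times> nat) set \<times> nat set set" where
"d2 M n s \<sigma> = (case s of (q, D, j) \<Rightarrow>
   ({(q', D', j') | q' D' j'. j' < n \<and> (\<exists>q1 a. (clos M n \<sigma>)\<^sup>*\<^sup>* (q, D) (q1, D') \<and> q_part M q1 = j \<and>
       \<sigma> ! j = Some a \<and> (q1, Some (Some a), q') \<in> q_trans M)}, {{j}}))"

definition I2 :: "'a saa \<Rightarrow> nat \<Rightarrow> (nat \<times> nat set \<times> nat) set" where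
"I2 M n = {(q, {}, j) | q j. q \<in> q_init M \<and> j < n}"

definition F2 :: "'a saa \<Rightarrow> nat \<Rightarrow> (nat \<times> nat set \<times> nat) set" where
"F2 M n = {(q, D, j) | q D j. (q, D, j) \<in> Q2 M n \<and> (\<exists>qf\<in>q_final M. (clos M n (replicate n None))\<^sup>*\<^sup>* (q, D) (qf, {..<n}))}"

lemma saa_wf_trans: "saa_wf n M \<Longrightarrow> (q, a, q') \<in> q_trans M \<Longrightarrow> q \<in> q_states M \<and> q' \<in> q_states M"
  unfolding saa_wf_def by (elim conjE) (drule bspec, assumption, simp)
lemma saa_wf_init: "saa_wf n M \<Longrightarrow> q_init M \<subseteq> q_states M"
  unfolding saa_wf_def by (elim conjE) assumption
lemma saa_wf_final: "saa_wf n M \<Longrightarrow> q_final M \<subseteq> q_states M"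
  unfolding saa_wf_def by (elim conjE) assumption
lemma saa_wf_fin: "saa_wf n M \<Longrightarrow> finite (q_states M)"
  unfolding saa_wf_def by (elim conjE) assumption

lemma clos_D: "(clos M n \<sigma>)\<^sup>*\<^sup>* (q, D) (q', D') \<Longrightarrow> D \<subseteq> {..<n} \<Longrightarrow> D' \<subseteq> {..<n}"
proof (induction rule: rtranclp_induct2)
  case refl then show ?case by simp
next
  case (step a b c d) then show ?case unfolding clos_def Let_def by auto
qed

lemma d2_simps: "d2 M n (q, D, j) \<sigma> = ({(q', D', j') | q' D' j'. j' < n \<and> (\<exists>q1 a. (clos M n \<sigma>)\<^sup>*\<^sup>* (q, D) (q1, D') \<and> q_part M q1 = j \<and>
       \<sigma> ! j = Some a \<and> (q1, Some (Some a), q') \<in> q_trans M)}, {{j}})"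
  by (simp add: d2_def)

lemma d2_wf:
  assumes wf: "saa_wf n M" and s: "s \<in> Q2 M n" and \<sigma>: "\<sigma> \<in> padded_alphabet n"
  shows "fst (d2 M n s \<sigma>) \<subseteq> Q2 M n \<and> snd (d2 M n s \<sigma>) \<subseteq> filters n \<and>
       (\<forall>i<n. \<sigma> ! i = None \<and> fst (d2 M n s \<sigma>) \<noteq> {} \<longrightarrow> (\<forall>\<chi>\<in>snd (d2 M n s \<sigma>). i \<notin> \<chi>)) \<and>
       card (snd (d2 M n s \<sigma>)) \<le> 1"
proof -
  obtain q D j where e: "s = (q, D, j)" by (cases s)
  have qs: "q \<in> q_states M" "D \<subseteq> {..<n}" "j < n" using s e unfolding Q2_def by auto
  have 1: "fst (d2 M n s \<sigma>) \<subseteq> Q2 M n"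
  proof
    fix x assume "x \<in> fst (d2 M n s \<sigma>)"
    then obtain q' D' j' q1 a where x: "x = (q', D', j')" "j' < n" "(clos M n \<sigma>)\<^sup>*\<^sup>* (q, D) (q1, D')"
      "(q1, Some (Some a), q') \<in> q_trans M" unfolding e d2_simps by auto
    have "q' \<in> q_states M" using saa_wf_trans[OF wf x(4)] by simp
    moreover have "D' \<subseteq> {..<n}" using clos_D[OF x(3) qs(2)] .
    ultimately show "x \<in> Q2 M n" using x unfolding Q2_def by auto
  qed
  have 2: "snd (d2 M n s \<sigma>) \<subseteq> filters n" using qs unfolding e d2_simps filters_def by auto
  have 3: "\<forall>i<n. \<sigma> ! i = None \<and> fst (d2 M n s \<sigma>) \<noteq> {} \<longrightarrow> (\<forall>\<chi>\<in>snd (d2 M n s \<sigma>). i \<notin> \<chi>)"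
    unfolding e d2_simps by auto
  have 4: "card (snd (d2 M n s \<sigma>)) \<le> 1" unfolding e d2_simps by simp
  show ?thesis using 1 2 3 4 by blast
qed

context
  fixes n :: nat and M :: "'a saa" and ws :: "'a list list"
  assumes wf: "saa_wf n M" and lws: "length ws = n" and n1: "n \<ge> 1"
begin

abbreviation "SA \<equiv> saa_step n M ws"
abbreviation "GF \<equiv> gfaa_step n (Q2 M n) (d2 M n) ws"

lemma sreach: "SA\<^sup>*\<^sup>* (q0, replicate n 0) (q, P) \<Longrightarrow> q0 \<in> q_init M \<Longrightarrow>
  \<exists>q1 D1 D p. q1 \<in> q_states M \<and> D1 \<subseteq> {..<n} \<and> length p = n \<and> (\<forall>i<n. p!i \<le> length (ws!i)) \<and>
    (\<forall>i\<in>D. p!i = length (ws!i)) \<and> D \<subseteq> {..<n} \<and> P = advance D p \<and>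
    (clos M n (cur_sym ws p))\<^sup>*\<^sup>* (q1, D1) (q, D) \<and>
    (\<forall>j<n. \<exists>j0<n. GF\<^sup>*\<^sup>* ((q0, {}, j0), replicate n 0) ((q1, D1, j), p))"
proof (induction rule: rtranclp_induct2)
  case refl
  have "q0 \<in> q_states M" using saa_wf_init[OF wf] refl by blast
  then show ?case
    by (intro exI[of _ q0] exI[of _ "{}"] exI[of _ "replicate n 0"]) auto
next
  case (step q P q' P')
  from step.IH[OF step.prems] obtain q1 D1 D p where ih: "q1 \<in> q_states M" "D1 \<subseteq> {..<n}" "length p = n"
    "\<forall>i<n. p!i \<le> length (ws!i)" "\<forall>i\<in>D. p!i = length (ws!i)" "D \<subseteq> {..<n}" "P = advance D p"
    "(clos M n (cur_sym ws p))\<^sup>*\<^sup>* (q1, D1) (q, D)"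
    "\<forall>j<n. \<exists>j0<n. GF\<^sup>*\<^sup>* ((q0, {}, j0), replicate n 0) ((q1, D1, j), p)" by blast
  from gsaa_stepD[OF step(2)[unfolded saa_step_eq]] show ?case
  proof (elim disjE exE conjE)
    assume tr: "(q, None, q') \<in> q_trans M" "P' = P"
    have "clos M n (cur_sym ws p) (q, D) (q', D)" unfolding clos_def Let_def using tr by simp
    then have "(clos M n (cur_sym ws p))\<^sup>*\<^sup>* (q1, D1) (q', D)" by (rule rtranclp.rtrancl_into_rtrancl[OF ih(8)])
    then show ?thesis using ih tr(2) by blast
  next
    fix a assume tr: "(q, Some a, q') \<in> q_trans M" and i: "q_part M q < n"
      and le: "P ! q_part M q \<le> length (ws ! q_part M q)"
      and a: "a = (if P ! q_part M q < length (ws ! q_part M q) then Some (ws ! q_part M q ! (P ! q_part M q)) else None)"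
      and P': "P' = P[q_part M q := Suc (P ! q_part M q)]"
    define i where "i = q_part M q"
    have iD: "i \<notin> D"
    proof
      assume "i \<in> D"
      then have "P ! i = Suc (length (ws ! i))" using ih(3,5,7) i unfolding i_def by simp
      then show False using le unfolding i_def by simp
    qed
    have Pi: "P ! i = p ! i" using ih(3,7) iD i unfolding i_def by simp
    have q'st: "q' \<in> q_states M" using saa_wf_trans[OF wf tr] by simp
    show ?thesis
    proof (cases "p ! i < length (ws ! i)")
      case True
      let ?\<sigma> = "cur_sym ws p"
      have ai: "a = Some (ws ! i ! (p ! i))" using a True Pi unfolding i_def by simp
      have si: "?\<sigma> ! i = Some (ws ! i ! (p ! i))" using True i lws unfolding i_def by simp
      have pad: "?\<sigma> \<in> padded_alphabet n"
      proof -
        have "?\<sigma> \<noteq> replicate n None"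
        proof
          assume "?\<sigma> = replicate n None"
          then have "?\<sigma> ! i = None" using i unfolding i_def by simp
          then show False using si by simp
        qed
        then show ?thesis unfolding padded_alphabet_def using lws by simp
      qed
      have gstep: "GF ((q1, D1, i), p) ((q', D, j), advance {i} p)" if j: "j < n" for j
      proof -
        have "(q', D, j) \<in> fst (d2 M n (q1, D1, i) ?\<sigma>)"
          unfolding d2_simps using j ih(8) si tr ai unfolding i_def by auto
        moreover have "(q1, D1, i) \<in> Q2 M n" using ih(1,2) i unfolding Q2_def i_def by auto
        moreover have "{i} \<in> snd (d2 M n (q1, D1, i) ?\<sigma>)" unfolding d2_simps by simp
        ultimately show ?thesis unfolding gfaa_step_def Let_def using pad by auto
      qed
      show ?thesis
      proof (intro exI conjI)
        show "q' \<in> q_states M" by fact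
        show "D \<subseteq> {..<n}" by fact
        show "D \<subseteq> {..<n}" by fact
        show "length (advance {i} p) = n" using ih(3) by simp
        show "\<forall>k<n. advance {i} p ! k \<le> length (ws ! k)" using ih(3,4) True by (auto simp: Suc_le_eq)
        show "\<forall>k\<in>D. advance {i} p ! k = length (ws ! k)" using ih(3,5,6) iD by auto
        have "P' = P[i := Suc (p!i)]" using P' Pi unfolding i_def by simp
        also have "\<dots> = (advance D p)[i := Suc (p!i)]" by (simp only: ih(7))
        also have "\<dots> = advance D (advance {i} p)"
          by (rule advance_upd2[OF iD]) (use ih(3) i in \<open>simp add: i_def\<close>)
        finally show "P' = advance D (advance {i} p)" .
        show "(clos M n (cur_sym ws (advance {i} p)))\<^sup>*\<^sup>* (q', D) (q', D)" by simp
        show "\<forall>j<n. \<exists>j0<n. GF\<^sup>*\<^sup>* ((q0, {}, j0), replicate n 0) ((q', D, j), advance {i} p)"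
        proof (intro allI impI)
          fix j assume "j < n"
          obtain j0 where "j0 < n" "GF\<^sup>*\<^sup>* ((q0, {}, j0), replicate n 0) ((q1, D1, i), p)" using ih(9) i unfolding i_def by blast
          moreover have "GF\<^sup>*\<^sup>* ((q0, {}, j0), replicate n 0) ((q', D, j), advance {i} p)"
            using calculation(2) gstep[OF \<open>j < n\<close>] by (rule rtranclp.rtrancl_into_rtrancl)
          ultimately show "\<exists>j0<n. GF\<^sup>*\<^sup>* ((q0, {}, j0), replicate n 0) ((q', D, j), advance {i} p)" by blast
        qed
      qed
    next
      case False
      then have pl: "p ! i = length (ws ! i)" using ih(4) i unfolding i_def by (meson le_neq_implies_less)
      have si: "cur_sym ws p ! i = None" using False i lws unfolding i_def by simp
      have an: "a = None" using a False Pi unfolding i_def by simp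
      have "clos M n (cur_sym ws p) (q, D) (q', insert i D)"
        unfolding clos_def Let_def using i iD si tr an unfolding i_def by simp
      then have "(clos M n (cur_sym ws p))\<^sup>*\<^sup>* (q1, D1) (q', insert i D)" by (rule rtranclp.rtrancl_into_rtrancl[OF ih(8)])
      moreover have "P' = advance (insert i D) p"
      proof -
        have "P' = P[i := Suc (p!i)]" using P' Pi unfolding i_def by simp
        also have "\<dots> = (advance D p)[i := Suc (p!i)]" by (simp only: ih(7))
        also have "\<dots> = advance (insert i D) p"
          by (rule advance_upd1[OF iD]) (use ih(3) i in \<open>simp add: i_def\<close>)
        finally show ?thesis .
      qed
      moreover have "\<forall>k\<in>insert i D. p!k = length (ws!k)" using ih(5) pl by auto
      moreover have "insert i D \<subseteq> {..<n}" using ih(6) i unfolding i_def by auto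
      ultimately show ?thesis using ih(1-4,9) by blast
    qed
  qed
qed

lemma clos_lift: "(clos M n \<sigma>)\<^sup>*\<^sup>* (q, D) (q', D') \<Longrightarrow> \<sigma> = cur_sym ws p \<Longrightarrow> length p = n \<Longrightarrow>
  (\<forall>i<n. p!i \<le> length (ws!i)) \<Longrightarrow> (\<forall>i\<in>D. p!i = length (ws!i)) \<Longrightarrow> D \<subseteq> {..<n} \<Longrightarrow>
  SA\<^sup>*\<^sup>* (q, advance D p) (q', advance D' p) \<and> (\<forall>i\<in>D'. p!i = length (ws!i)) \<and> D' \<subseteq> {..<n}"
proof (induction rule: rtranclp_induct2)
  case refl then show ?case by simp
next
  case (step q1 D1 q2 D2)
  then have ih: "SA\<^sup>*\<^sup>* (q, advance D p) (q1, advance D1 p)" "\<forall>i\<in>D1. p!i = length (ws!i)" "D1 \<subseteq> {..<n}" by auto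
  from step(2) show ?case unfolding clos_def Let_def fst_conv snd_conv
  proof (elim disjE conjE)
    assume e: "(q1, None, q2) \<in> q_trans M" "D2 = D1"
    then have "SA (q1, advance D1 p) (q2, advance D2 p)" unfolding saa_step_eq by (simp add: gsaa_eps)
    then show ?thesis using ih e(2) by (meson rtranclp.rtrancl_into_rtrancl)
  next
    assume i: "q_part M q1 < n" "q_part M q1 \<notin> D1" "\<sigma> ! q_part M q1 = None"
      and tr: "(q1, Some None, q2) \<in> q_trans M" and D2: "D2 = insert (q_part M q1) D1"
    define j where "j = q_part M q1"
    have pj1: "p ! j \<le> length (ws ! j)" using i step.prems(3) unfolding j_def by simp
    have pj2: "\<not> p ! j < length (ws ! j)" using i step.prems(1) lws unfolding j_def by (simp split: if_splits)
    have pj: "p ! j = length (ws ! j)" using pj1 pj2 by linarith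
    have aj: "advance D1 p ! j = p ! j" using i step.prems(2) unfolding j_def by simp
    have "SA (q1, advance D1 p) (q2, advance D2 p)" unfolding saa_step_eq
    proof (rule gsaa_letter[OF tr])
      show "q_part M q1 = j" by (simp add: j_def)
      show "j < n" using i unfolding j_def by simp
      show "advance D1 p ! j \<le> length (ws ! j)" using aj pj by simp
      show "None = (if advance D1 p ! j < length (ws ! j) then Some (ws ! j ! (advance D1 p ! j)) else None)"
        using aj pj by simp
      show "advance D2 p = (advance D1 p)[j := Suc (advance D1 p ! j)]"
        unfolding aj D2 j_def[symmetric] using advance_upd1[of j D1 p] i step.prems(2) unfolding j_def by simp
    qed
    then show ?thesis using ih D2 pj i unfolding j_def by (auto intro: rtranclp.rtrancl_into_rtrancl)
  qed
qed

lemma freach: "GF\<^sup>*\<^sup>* ((q0, {}, j0), replicate n 0) (s, p) \<Longrightarrow> q0 \<in> q_init M \<Longrightarrow>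
  \<exists>q D j. s = (q, D, j) \<and> q \<in> q_states M \<and> D \<subseteq> {..<n} \<and> length p = n \<and> (\<forall>i<n. p!i \<le> length (ws!i)) \<and>
    (\<forall>i\<in>D. p!i = length (ws!i)) \<and> SA\<^sup>*\<^sup>* (q0, replicate n 0) (q, advance D p)"
proof (induction rule: rtranclp_induct2)
  case refl
  have "q0 \<in> q_states M" using saa_wf_init[OF wf] refl by blast
  then show ?case by auto
next
  case (step s p s' p')
  from step.IH[OF step.prems] obtain q D j where ih: "s = (q, D, j)" "q \<in> q_states M" "D \<subseteq> {..<n}" "length p = n"
    "\<forall>i<n. p!i \<le> length (ws!i)" "\<forall>i\<in>D. p!i = length (ws!i)" "SA\<^sup>*\<^sup>* (q0, replicate n 0) (q, advance D p)" by blast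
  let ?\<sigma> = "cur_sym ws p"
  from step(2) obtain \<chi> where g: "(q, D, j) \<in> Q2 M n" "\<chi> \<in> snd (d2 M n (q, D, j) ?\<sigma>)"
    "s' \<in> fst (d2 M n (q, D, j) ?\<sigma>)" "p' = advance \<chi> p"
    unfolding gfaa_step_def Let_def ih(1) by auto
  have jn: "j < n" using g(1) unfolding Q2_def by auto
  have chi: "\<chi> = {j}" using g(2) unfolding d2_simps by simp
  from g(3) obtain q' D' j' q1 a where x: "s' = (q', D', j')" "j' < n" "(clos M n ?\<sigma>)\<^sup>*\<^sup>* (q, D) (q1, D')"
    "q_part M q1 = j" "?\<sigma> ! j = Some a" "(q1, Some (Some a), q') \<in> q_trans M" unfolding d2_simps by auto
  from clos_lift[OF x(3) refl ih(4,5,6,3)] have cl: "SA\<^sup>*\<^sup>* (q, advance D p) (q1, advance D' p)"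
    "\<forall>i\<in>D'. p!i = length (ws!i)" "D' \<subseteq> {..<n}" by auto
  have pj: "p ! j < length (ws ! j)" and aa: "a = ws ! j ! (p ! j)"
    using x(5) jn lws by (auto split: if_splits)
  have jD: "j \<notin> D'" using cl(2) pj by auto
  have aj: "advance D' p ! j = p ! j" using jD jn ih(4) by simp
  have "SA (q1, advance D' p) (q', advance D' (advance {j} p))" unfolding saa_step_eq
  proof (rule gsaa_letter[where part="q_part M", OF x(6) x(4) jn])
    show "advance D' p ! j \<le> length (ws ! j)" using aj pj by simp
    show "Some a = (if advance D' p ! j < length (ws ! j) then Some (ws ! j ! (advance D' p ! j)) else None)"
      using aj pj aa by simp
    show "advance D' (advance {j} p) = (advance D' p)[j := Suc (advance D' p ! j)]"
      unfolding aj using advance_upd2[OF jD] jn ih(4) by simp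
  qed
  then have run: "SA\<^sup>*\<^sup>* (q0, replicate n 0) (q', advance D' (advance {j} p))"
    using ih(7) cl(1) by (meson rtranclp.rtrancl_into_rtrancl rtranclp_trans)
  have q'st: "q' \<in> q_states M" using saa_wf_trans[OF wf x(6)] by simp
  show ?case
  proof (intro exI conjI)
    show "s' = (q', D', j')" by fact
    show "q' \<in> q_states M" by fact
    show "D' \<subseteq> {..<n}" by fact
    show "length p' = n" using g(4) ih(4) by simp
    show "\<forall>i<n. p'!i \<le> length (ws!i)" using g(4) chi ih(4,5) pj by (auto simp: Suc_le_eq)
    show "\<forall>i\<in>D'. p'!i = length (ws!i)" using g(4) chi ih(4) cl(2,3) jD by auto
    show "SA\<^sup>*\<^sup>* (q0, replicate n 0) (q', advance D' p')" using run g(4) chi by simp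
  qed
qed

lemma lang2: "gfaa_acc n (Q2 M n) (I2 M n) (F2 M n) (d2 M n) ws \<longleftrightarrow> saa_accepts n M ws"
proof
  assume "gfaa_acc n (Q2 M n) (I2 M n) (F2 M n) (d2 M n) ws"
  then obtain s0 sf where s: "s0 \<in> I2 M n" "sf \<in> F2 M n" "GF\<^sup>*\<^sup>* (s0, replicate n 0) (sf, map length ws)"
    unfolding gfaa_acc_def by blast
  from s(1) obtain q0 j0 where q0: "s0 = (q0, {}, j0)" "q0 \<in> q_init M" unfolding I2_def by blast
  from s(2) obtain q D j qf where f: "sf = (q, D, j)" "qf \<in> q_final M"
    "(clos M n (replicate n None))\<^sup>*\<^sup>* (q, D) (qf, {..<n})" unfolding F2_def by blast
  let ?p = "map length ws"
  from freach[OF s(3)[unfolded q0(1)] q0(2)] f(1) have r: "D \<subseteq> {..<n}" "\<forall>i\<in>D. ?p!i = length (ws!i)"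
    "SA\<^sup>*\<^sup>* (q0, replicate n 0) (q, advance D ?p)" by auto
  have cs: "replicate n None = cur_sym ws ?p" using cur_sym_end[of ws] lws by simp
  have "SA\<^sup>*\<^sup>* (q, advance D ?p) (qf, advance {..<n} ?p)"
    using clos_lift[OF f(3) cs] r lws by simp
  moreover have "advance {..<n} ?p = map (\<lambda>w. Suc (length w)) ws" using advance_all[of ?p n] lws by simp
  ultimately have "SA\<^sup>*\<^sup>* (q0, replicate n 0) (qf, map (\<lambda>w. Suc (length w)) ws)"
    using r(3) by (metis rtranclp_trans)
  then show "saa_accepts n M ws" unfolding saa_accepts_def using lws q0(2) f(2) by blast
next
  assume "saa_accepts n M ws"
  then obtain q0 qf where s: "q0 \<in> q_init M" "qf \<in> q_final M"
    "SA\<^sup>*\<^sup>* (q0, replicate n 0) (qf, map (\<lambda>w. Suc (length w)) ws)" unfolding saa_accepts_def by blast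
  from sreach[OF s(3) s(1)] obtain q1 D1 D p where ih: "q1 \<in> q_states M" "D1 \<subseteq> {..<n}" "length p = n"
    "\<forall>i<n. p!i \<le> length (ws!i)" "\<forall>i\<in>D. p!i = length (ws!i)" "D \<subseteq> {..<n}"
    "map (\<lambda>w. Suc (length w)) ws = advance D p"
    "(clos M n (cur_sym ws p))\<^sup>*\<^sup>* (q1, D1) (qf, D)"
    "\<forall>j<n. \<exists>j0<n. GF\<^sup>*\<^sup>* ((q0, {}, j0), replicate n 0) ((q1, D1, j), p)" by blast
  have all: "i \<in> D \<and> p!i = length (ws!i)" if i: "i < n" for i
  proof -
    have "advance D p ! i = Suc (length (ws!i))" using ih(7)[symmetric] i lws by simp
    then show ?thesis using ih(3,4) i by (auto split: if_splits)
  qed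
  have D: "D = {..<n}" using all ih(6) by auto
  have p: "p = map length ws" using all ih(3) lws by (intro nth_equalityI) auto
  have cs: "cur_sym ws p = replicate n None" using cur_sym_end[of ws] lws p by simp
  obtain j0 where j0: "j0 < n" "GF\<^sup>*\<^sup>* ((q0, {}, j0), replicate n 0) ((q1, D1, 0), p)" using ih(9) n1 by auto
  have "(q1, D1, 0) \<in> F2 M n" unfolding F2_def Q2_def using ih(1,2,8) n1 s(2) cs D by auto
  moreover have "(q0, {}, j0) \<in> I2 M n" unfolding I2_def using s(1) j0(1) by auto
  ultimately show "gfaa_acc n (Q2 M n) (I2 M n) (F2 M n) (d2 M n) ws"
    unfolding gfaa_acc_def using lws j0(2) p by blast
qed

end

lemma saa_to_dfaa:
  fixes M :: "'a saa"
  assumes wf: "saa_wf n M" and n: "n \<ge> 1"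
  shows "\<exists>M'::'a faa. is_dfaa n M' \<and> faa_lang n M' = saa_lang n M"
proof -
  have "\<exists>M'::'a faa. is_dfaa n M' \<and> faa_lang n M' = {ws. gfaa_acc n (Q2 M n) (I2 M n) (F2 M n) (d2 M n) ws}"
  proof (rule dfaa_transfer)
    show "finite (Q2 M n)" unfolding Q2_def using saa_wf_fin[OF wf] by simp
    show "I2 M n \<subseteq> Q2 M n" unfolding I2_def Q2_def using saa_wf_init[OF wf] by auto
    show "F2 M n \<subseteq> Q2 M n" unfolding F2_def by auto
    show "\<forall>s\<in>Q2 M n. \<forall>\<sigma>\<in>padded_alphabet n.
       fst (d2 M n s \<sigma>) \<subseteq> Q2 M n \<and> snd (d2 M n s \<sigma>) \<subseteq> filters n \<and>
       (\<forall>i<n. \<sigma> ! i = None \<and> fst (d2 M n s \<sigma>) \<noteq> {} \<longrightarrow> (\<forall>\<chi>\<in>snd (d2 M n s \<sigma>). i \<notin> \<chi>)) \<and>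
       card (snd (d2 M n s \<sigma>)) \<le> 1"
      using d2_wf[OF wf] by blast
  qed
  moreover have "{ws. gfaa_acc n (Q2 M n) (I2 M n) (F2 M n) (d2 M n) ws} = saa_lang n M"
  proof -
    have "gfaa_acc n (Q2 M n) (I2 M n) (F2 M n) (d2 M n) ws \<longleftrightarrow> saa_accepts n M ws" for ws
    proof (cases "length ws = n")
      case True then show ?thesis using lang2[OF wf True n] by blast
    next
      case False then show ?thesis unfolding gfaa_acc_def saa_accepts_def by blast
    qed
    then show ?thesis unfolding saa_lang_def by blast
  qed
  ultimately show ?thesis by simp
qed



theorem mainTheorem7:
  fixes L :: "('a::finite) list list set" and n :: nat
  assumes "n \<ge> 1" and "\<forall>w\<in>L. length w = n"
  shows "((\<exists>M::'a faa. faa_wf n M \<and> faa_lang n M = L) \<longleftrightarrow>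
            (\<exists>M::'a faa. is_dfaa n M \<and> faa_lang n M = L)) \<and>
         ((\<exists>M::'a faa. is_dfaa n M \<and> faa_lang n M = L) \<longleftrightarrow>
            (\<exists>M::'a saa. saa_wf n M \<and> saa_lang n M = L))"
proof -
  have fs: "\<exists>M::'a saa. saa_wf n M \<and> saa_lang n M = L" if "\<exists>M::'a faa. faa_wf n M \<and> faa_lang n M = L"
    using that faa_to_saa[OF _ assms(1)] by blast
  have sd: "\<exists>M::'a faa. is_dfaa n M \<and> faa_lang n M = L" if "\<exists>M::'a saa. saa_wf n M \<and> saa_lang n M = L"
    using that saa_to_dfaa[OF _ assms(1)] by blast
  have df: "\<exists>M::'a faa. faa_wf n M \<and> faa_lang n M = L" if "\<exists>M::'a faa. is_dfaa n M \<and> faa_lang n M = L"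
    using that unfolding is_dfaa_def by blast
  show ?thesis using fs sd df by blast
qed

end
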